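(* Consider the rendezvous game on a connected graph $G$ against Divider with exactly one agent $D_1$. Suppose that at some moment when it is Facilitator's turn to move, $R$ and $J$ occupy vertices of a cycle $C$ of $G$ that has no shortcut, and $D_1$ also occupies a vertex of $C$. Then Facilitator has a winning strategy in which $R$ and $J$ meet within at most $\ell(C)/2$ further moves of Facilitator.
   Context: Rendezvous game with adversaries. Let $G$ be a finite, simple, undirected, connected graph, let $s,t\in V(G)$ and let $k\ge 1$ be an integer. Two players play: Facilitator, who controls two agents $R$ and $J$ initially placed on $s$ and $t$ respectively, and Divider, who controls $k$ agents $D_1,\dots,D_k$ which Divider initially places on vertices of $V(G)\setminus\{s,t\}$ of his choice (several agents may share a vertex). After the initial placement the players alternate moves, Facilitator moving first. In a move, the player moves each of his agents to an adjacent vertex or leaves it where it is; no agent may be moved to a vertex currently occupied by an agent of the opponent. Both players have full information. Facilitator wins if at some moment $R$ and $J$ occupy the same vertex; Divider wins if this never happens. $\ell(P)$, $\ell(C)$ denote the number of edges of a path $P$ or cycle $C$. For a cycle $C$ of $G$ and distinct $u,v\in V(C)$, let $P_1,P_2$ be the two internally vertex-disjoint $(u,v)$-paths contained in $C$. $C$ has a $(u,v)$-shortcut if there is a $(u,v)$-path $P$ in $G-(V(C)\setminus\{u,v\})$ with $\ell(P)<\ell(P_1)$ and $\ell(P)<\ell(P_2)$; $C$ has a shortcut if it has a $(u,v)$-shortcut for some distinct $u,v\in V(C)$. *)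

theory Defs
  imports Main
begin

definition simple_graph :: "'a set \<Rightarrow> ('a \<Rightarrow> 'a \<Rightarrow> bool) \<Rightarrow> bool" where
  "simple_graph V E \<longleftrightarrow> finite V \<and>
     (\<forall>x y. E x y \<longrightarrow> x \<in> V \<and> y \<in> V \<and> x \<noteq> y \<and> E y x)"

definition connected_graph :: "'a set \<Rightarrow> ('a \<Rightarrow> 'a \<Rightarrow> bool) \<Rightarrow> bool" where
  "connected_graph V E \<longleftrightarrow> V \<noteq> {} \<and> (\<forall>x\<in>V. \<forall>y\<in>V. E\<^sup>*\<^sup>* x y)"

text \<open>A cycle is given by the cyclic list of its distinct vertices c_0, ..., c_(n-1), n >= 3;
  its length (number of edges) is n.\<close>
definition is_cycle :: "'a set \<Rightarrow> ('a \<Rightarrow> 'a \<Rightarrow> bool) \<Rightarrow> 'a list \<Rightarrow> bool" where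
  "is_cycle V E cs \<longleftrightarrow> length cs \<ge> 3 \<and> distinct cs \<and> set cs \<subseteq> V \<and>
     (\<forall>i < length cs. E (cs ! i) (cs ! ((i + 1) mod length cs)))"

text \<open>A (u,v)-path given as its list of distinct vertices; its length is (number of vertices - 1).\<close>
definition is_path :: "('a \<Rightarrow> 'a \<Rightarrow> bool) \<Rightarrow> 'a list \<Rightarrow> 'a \<Rightarrow> 'a \<Rightarrow> bool" where
  "is_path E ps u v \<longleftrightarrow> ps \<noteq> [] \<and> hd ps = u \<and> last ps = v \<and> distinct ps \<and>
     (\<forall>i. i + 1 < length ps \<longrightarrow> E (ps ! i) (ps ! (i + 1)))"

text \<open>Shortcut: for distinct u = c_i, v = c_k (i < k) the two arcs of C have lengths k - i and
  n - (k - i); a shortcut is a (u,v)-path avoiding V(C) - {u,v} strictly shorter than both.\<close>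
definition has_shortcut :: "'a set \<Rightarrow> ('a \<Rightarrow> 'a \<Rightarrow> bool) \<Rightarrow> 'a list \<Rightarrow> bool" where
  "has_shortcut V E cs \<longleftrightarrow>
     (\<exists>i k ps. i < k \<and> k < length cs \<and> is_path E ps (cs ! i) (cs ! k) \<and> set ps \<subseteq> V \<and>
        set ps \<inter> set cs \<subseteq> {cs ! i, cs ! k} \<and>
        length ps - 1 < k - i \<and> length ps - 1 < length cs - (k - i))"

definition step :: "('a \<Rightarrow> 'a \<Rightarrow> bool) \<Rightarrow> 'a \<Rightarrow> 'a \<Rightarrow> bool" where
  "step E x y \<longleftrightarrow> x = y \<or> E x y"

text \<open>Game with one Divider agent. fwin E n r j d: in the position where R is at r, J at j,
  D_1 at d and Facilitator is to move, Facilitator can force R and J to meet within at most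
  n further Facilitator moves.\<close>
fun fwin :: "('a \<Rightarrow> 'a \<Rightarrow> bool) \<Rightarrow> nat \<Rightarrow> 'a \<Rightarrow> 'a \<Rightarrow> 'a \<Rightarrow> bool" where
  "fwin E 0 r j d = (r = j)"
| "fwin E (Suc n) r j d =
     (r = j \<or> (\<exists>r' j'. step E r r' \<and> step E j j' \<and> r' \<noteq> d \<and> j' \<noteq> d \<and>
        (r' = j' \<or> (\<forall>d'. step E d d' \<and> d' \<noteq> r' \<and> d' \<noteq> j' \<longrightarrow> fwin E n r' j' d'))))"

end

theory Submission
  imports Defs
begin

lemma mod_shift:
  fixes s D n :: nat
  assumes "0 < D" "D < n"
  shows "(s + D) mod n = s mod n + D \<or> (s + D) mod n + n = s mod n + D"
proof -
  have n0: "n > 0" using assms by simp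
  have e: "(s + D) mod n = (s mod n + D) mod n" by (simp add: mod_add_left_eq)
  have v: "s mod n < n" using n0 by simp
  show ?thesis
  proof (cases "s mod n + D < n")
    case True then show ?thesis using e by simp
  next
    case False
    hence "(s mod n + D) mod n = s mod n + D - n"
    proof -
      have "(s mod n + D) mod n = (s mod n + D - n) mod n" using False by (simp add: le_mod_geq)
      also have "\<dots> = s mod n + D - n" using v assms by (intro mod_less) linarith
      finally show ?thesis .
    qed
    then show ?thesis using e False by simp
  qed
qed

lemma is_path_rev:
  assumes sym: "\<And>x y. E x y \<Longrightarrow> E y x" and p: "is_path E ps u v"
  shows "is_path E (rev ps) v u"
proof -
  have ne: "ps \<noteq> []" using p by (simp add: is_path_def)
  have ed: "\<And>i. i + 1 < length ps \<Longrightarrow> E (ps ! i) (ps ! (i + 1))" using p by (simp add: is_path_def)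
  have "E (rev ps ! i) (rev ps ! (i + 1))" if "i + 1 < length ps" for i
  proof -
    have a: "rev ps ! i = ps ! (length ps - 1 - i)" using that by (simp add: rev_nth)
    have b: "rev ps ! (i+1) = ps ! (length ps - 1 - (i+1))" using that by (simp add: rev_nth)
    have "E (ps ! (length ps - 1 - (i+1))) (ps ! (length ps - 1 - (i+1) + 1))"
      using ed[of "length ps - 1 - (i+1)"] that by simp
    moreover have "length ps - 1 - (i+1) + 1 = length ps - 1 - i" using that by simp
    ultimately show ?thesis using a b sym by metis
  qed
  then show ?thesis using p ne by (simp add: is_path_def hd_rev last_rev)
qed

lemma is_path_drop:
  assumes p: "is_path E ps u v" and i: "i < length ps"
  shows "is_path E (drop i ps) (ps ! i) v"
  using p i unfolding is_path_def
  by (auto simp: hd_drop_conv_nth last_drop)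

lemma is_path_cons:
  assumes p: "is_path E ps u v" and e: "E w u" and w: "w \<notin> set ps"
  shows "is_path E (w # ps) w v"
proof -
  have ne: "ps \<noteq> []" and h: "hd ps = u" using p by (auto simp: is_path_def)
  have "E ((w # ps) ! i) ((w # ps) ! (i + 1))" if "i + 1 < length (w # ps)" for i
  proof (cases i)
    case 0 then show ?thesis using e h ne by (simp add: hd_conv_nth)
  next
    case (Suc i') then show ?thesis using p that by (simp add: is_path_def)
  qed
  then show ?thesis using p w ne by (auto simp: is_path_def)
qed


lemma mod_eq_lemma:
  fixes a p q n :: nat
  assumes "(a + p) mod n = (a + q) mod n" "p < n" "q < n"
  shows "p = q"
proof -
  have "n dvd (a + q) - (a + p)" if "p \<le> q" "(a + q) mod n = (a + p) mod n" for p q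
    using that mod_eq_dvd_iff_nat by simp
  have h: "p = q" if "p \<le> q" "(a + q) mod n = (a + p) mod n" "q < n" for p q
  proof -
    have "n dvd (a + q) - (a + p)" using that mod_eq_dvd_iff_nat by simp
    hence "n dvd q - p" by simp
    moreover have "q - p < n" using that by simp
    ultimately have "q - p = 0" using dvd_imp_le by fastforce
    then show ?thesis using that by simp
  qed
  show ?thesis
  proof (cases "p \<le> q")
    case True then show ?thesis using h assms by simp
  next
    case False then show ?thesis using h[of q p] assms by simp
  qed
qed

context
  fixes V :: "'a set" and E :: "'a \<Rightarrow> 'a \<Rightarrow> bool" and cs :: "'a list"
  assumes sg: "simple_graph V E" and cyc: "is_cycle V E cs" and ns: "\<not> has_shortcut V E cs"
begin

definition cv :: "nat \<Rightarrow> 'a" where "cv i = cs ! (i mod length cs)"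

lemma n3: "length cs \<ge> 3" using cyc by (simp add: is_cycle_def)
lemma npos: "0 < length cs" using n3 by linarith

lemma Esym: "E x y \<Longrightarrow> E y x" using sg by (simp add: simple_graph_def)
lemma EV: "E x y \<Longrightarrow> x \<in> V \<and> y \<in> V" using sg by (simp add: simple_graph_def)

lemma cv_in: "cv i \<in> set cs"
  using npos unfolding cv_def by (intro nth_mem) simp

lemma cv_cong: "i mod length cs = j mod length cs \<Longrightarrow> cv i = cv j"
  by (simp add: cv_def)

lemma cv_edge: "E (cv i) (cv (Suc i))"
proof -
  have "E (cs ! (i mod length cs)) (cs ! ((i mod length cs + 1) mod length cs))"
    using cyc n3 unfolding is_cycle_def by (metis Suc_eq_plus1 mod_less_divisor npos)
  moreover have "(i mod length cs + 1) mod length cs = Suc i mod length cs"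
    by (simp add: mod_Suc_eq)
  ultimately show ?thesis by (simp add: cv_def)
qed

lemma cv_step: "step E (cv i) (cv (Suc i))" "step E (cv (Suc i)) (cv i)"
  using cv_edge Esym by (auto simp: step_def)

lemma cv_inj:
  assumes "p < length cs" "q < length cs" "cv (a + p) = cv (a + q)"
  shows "p = q"
proof -
  have d: "distinct cs" using cyc by (simp add: is_cycle_def)
  have "(a + p) mod length cs = (a + q) mod length cs"
    using assms(3) d npos by (simp add: cv_def nth_eq_iff_index_eq)
  then show ?thesis using assms(1,2) mod_eq_lemma by blast
qed

lemma cv_surj:
  assumes "v \<in> set cs"
  shows "\<exists>m < length cs. v = cv (a + m)"
proof -
  let ?n = "length cs"
  obtain i where i: "i < ?n" "v = cs ! i" using assms by (metis in_set_conv_nth)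
  define m where "m = (i + ?n - a mod ?n) mod ?n"
  have "(a + m) mod ?n = i"
  proof -
    have "(a + m) mod ?n = (a mod ?n + m) mod ?n" by (simp add: mod_add_left_eq)
    also have "\<dots> = (a mod ?n + (i + ?n - a mod ?n)) mod ?n" unfolding m_def
      by (simp add: mod_add_right_eq)
    also have "a mod ?n + (i + ?n - a mod ?n) = i + ?n" using npos by (simp add: trans_le_add2)
    finally show ?thesis using i by simp
  qed
  moreover have "m < ?n" using npos by (simp add: m_def)
  ultimately show ?thesis using i by (auto simp: cv_def)
qed


lemma path_in_V:
  assumes p: "is_path E Q u v" and uv: "u \<noteq> v"
  shows "set Q \<subseteq> V"
proof
  fix y assume "y \<in> set Q"
  then obtain j where j: "j < length Q" "y = Q ! j" by (metis in_set_conv_nth)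
  have ne: "Q \<noteq> []" "hd Q = u" "last Q = v" using p by (auto simp: is_path_def)
  have L: "length Q \<ge> 2"
  proof (rule ccontr)
    assume "\<not> length Q \<ge> 2"
    moreover have "length Q > 0" using ne by simp
    ultimately have "length Q = 1" by linarith
    then obtain w where "Q = [w]" by (metis One_nat_def length_0_conv length_Suc_conv)
    then show False using ne uv by simp
  qed
  have ed: "\<And>i. i + 1 < length Q \<Longrightarrow> E (Q ! i) (Q ! (i + 1))" using p by (simp add: is_path_def)
  show "y \<in> V"
  proof (cases "j + 1 < length Q")
    case True then show ?thesis using ed[OF True] EV j by blast
  next
    case False
    then have "j - 1 + 1 < length Q" "j - 1 + 1 = j" using L j by auto
    then show ?thesis using ed[of "j - 1"] EV j by metis
  qed
qed

lemma ns_rule: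
  assumes "i < k" "k < length cs" "is_path E ps (cs ! i) (cs ! k)" "set ps \<subseteq> V"
    "set ps \<inter> set cs \<subseteq> {cs ! i, cs ! k}"
  shows "\<not> (length ps - 1 < k - i \<and> length ps - 1 < length cs - (k - i))"
  using ns assms unfolding has_shortcut_def by blast

lemma noshort_bound:
  assumes d: "d = cv (a + g + e)" and e: "1 \<le> e" "g + e < length cs"
    and k: "0 < k" "k \<le> g"
    and p: "is_path E Q d (cv (a + k))"
    and cy: "\<forall>v\<in>set Q. v \<in> set cs \<longrightarrow> v = d \<or> v = cv (a + k)"
  shows "min k (g - k) + 1 \<le> length Q - 1"
proof -
  let ?n = "length cs"
  define D where "D = g + e - k"
  have D: "0 < D" "D < ?n" "a + g + e = (a + k) + D" using e k by (auto simp: D_def)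
  define i0 where "i0 = (a + k + D) mod ?n"
  define k0 where "k0 = (a + k) mod ?n"
  have dd: "d = cs ! i0" using d D by (simp add: cv_def i0_def)
  have xx: "cv (a + k) = cs ! k0" by (simp add: cv_def k0_def)
  have i0n: "i0 < ?n" "k0 < ?n" using npos by (auto simp: i0_def k0_def)
  have ms: "i0 = k0 + D \<or> i0 + ?n = k0 + D" using mod_shift[OF D(1,2), of "a + k"]
    by (simp add: i0_def k0_def)
  have dx: "d \<noteq> cv (a + k)"
  proof
    assume "d = cv (a + k)"
    then have "cv (a + (g + e)) = cv (a + k)" using d by (simp add: add.assoc)
    moreover have "g + e < length cs" "k < length cs" using e k by auto
    ultimately have "g + e = k" using cv_inj by blast
    then show False using e k by simp
  qed
  have QV: "set Q \<subseteq> V" using path_in_V[OF p dx] .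
  have cy': "\<forall>v\<in>set Q. v \<in> set cs \<longrightarrow> v = cs ! i0 \<or> v = cs ! k0"
    using cy unfolding dd xx .
  let ?l = "length Q - 1"
  have "D \<le> ?l \<or> ?n - D \<le> ?l"
  proof (cases "k0 < i0")
    case True
    then have dif: "i0 - k0 = D" using ms i0n D by arith
    have pr: "is_path E (rev Q) (cs ! k0) (cs ! i0)" using is_path_rev[OF Esym p] dd xx by simp
    have "set (rev Q) \<inter> set cs \<subseteq> {cs ! k0, cs ! i0}" using cy' by auto
    then have "\<not> (length (rev Q) - 1 < i0 - k0 \<and> length (rev Q) - 1 < ?n - (i0 - k0))"
      using ns_rule[OF True i0n(1) pr] QV by simp
    then show ?thesis using dif by auto
  next
    case False
    have "i0 \<noteq> k0" using dx unfolding dd xx by auto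
    then have lt: "i0 < k0" using False by simp
    then have dif: "k0 - i0 = ?n - D" using ms i0n D by arith
    have pr: "is_path E Q (cs ! i0) (cs ! k0)" using p dd xx by simp
    have "set Q \<inter> set cs \<subseteq> {cs ! i0, cs ! k0}" using cy' by auto
    then have "\<not> (length Q - 1 < k0 - i0 \<and> length Q - 1 < ?n - (k0 - i0))"
      using ns_rule[OF lt i0n(2) pr] QV by simp
    then show ?thesis using dif D by auto
  qed
  moreover have "D \<ge> g - k + 1" "?n - D \<ge> k + 1" using e k by (auto simp: D_def)
  ultimately show ?thesis by linarith
qed

lemma walk_reduce:
  assumes p: "is_path E Q d' x" and d': "d' \<notin> set cs"
    and cy: "\<forall>v\<in>set Q. v \<in> set cs \<longrightarrow> v = d' \<or> v = x"
    and st: "step E d d'"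
  shows "\<exists>Q0. is_path E Q0 d x \<and> (\<forall>v\<in>set Q0. v \<in> set cs \<longrightarrow> v = d \<or> v = x)
      \<and> length Q0 \<le> length Q + 1"
proof (cases "d \<in> set Q")
  case True
  then obtain i where i: "i < length Q" "Q ! i = d" by (metis in_set_conv_nth)
  have "is_path E (drop i Q) d x" using is_path_drop[OF p i(1)] i by simp
  moreover have "\<forall>v\<in>set (drop i Q). v \<in> set cs \<longrightarrow> v = d \<or> v = x"
    using cy d' set_drop_subset by fastforce
  ultimately show ?thesis by (intro exI[of _ "drop i Q"]) auto
next
  case False
  have hd: "hd Q = d'" "Q \<noteq> []" using p by (auto simp: is_path_def)
  then have "d \<noteq> d'" using False by auto
  then have "E d d'" using st by (simp add: step_def)
  then have "is_path E (d # Q) d x" using is_path_cons[OF p _ False] by simp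
  moreover have "\<forall>v\<in>set (d # Q). v \<in> set cs \<longrightarrow> v = d \<or> v = x"
    using cy d' by auto
  ultimately show ?thesis by (intro exI[of _ "d # Q"]) auto
qed


definition inv :: "nat \<Rightarrow> nat \<Rightarrow> 'a \<Rightarrow> bool" where
  "inv a g d \<longleftrightarrow> g + 1 < length cs \<and>
     (d \<in> set cs \<longrightarrow> (\<exists>e. 1 \<le> e \<and> g + e < length cs \<and> d = cv (a + g + e))) \<and>
     (\<forall>k Q. 0 < k \<and> k < g \<and> is_path E Q d (cv (a + k)) \<and>
        (\<forall>v\<in>set Q. v \<in> set cs \<longrightarrow> v = d \<or> v = cv (a + k)) \<longrightarrow> min k (g - k) + 1 \<le> length Q - 1)"

lemma inv_ne:
  assumes "inv a g d" "k \<le> g"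
  shows "cv (a + k) \<noteq> d"
proof
  assume h: "cv (a + k) = d"
  then have "d \<in> set cs" using cv_in[of "a + k"] by metis
  then obtain e where e: "1 \<le> e" "g + e < length cs" "d = cv (a + g + e)"
    using assms(1) unfolding inv_def by blast
  have "cv (a + k) = cv (a + (g + e))" using h e by (simp add: add.assoc)
  moreover have "k < length cs" using e assms(2) by simp
  ultimately have "k = g + e" using cv_inj e(2) by blast
  then show False using e assms(2) by simp
qed

lemma inv_init:
  assumes "g + 1 < length cs" "1 \<le> e" "g + e < length cs" "d = cv (a + g + e)"
  shows "inv a g d"
  unfolding inv_def using assms noshort_bound[OF assms(4,2,3)] by auto

lemma inv_step:
  assumes I: "inv a g d" and g3: "3 \<le> g" and st: "step E d d'"
  shows "inv (Suc a) (g - 2) d'"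
proof -
  let ?n = "length cs"
  have gn: "g + 1 < ?n" using I by (simp add: inv_def)
  have I1: "d \<in> set cs \<Longrightarrow> \<exists>e. 1 \<le> e \<and> g + e < ?n \<and> d = cv (a + g + e)"
    using I by (simp add: inv_def)
  have I2: "\<And>k Q. 0 < k \<Longrightarrow> k < g \<Longrightarrow> is_path E Q d (cv (a + k)) \<Longrightarrow>
        (\<forall>v\<in>set Q. v \<in> set cs \<longrightarrow> v = d \<or> v = cv (a + k)) \<Longrightarrow> min k (g - k) + 1 \<le> length Q - 1"
    using I unfolding inv_def by blast
  have J1: "\<exists>e. 1 \<le> e \<and> g - 2 + e < ?n \<and> d' = cv (Suc a + (g - 2) + e)" if dc: "d' \<in> set cs"
  proof (cases "d = d'")
    case True
    then obtain e where e: "1 \<le> e" "g + e < ?n" "d = cv (a + g + e)" using I1 dc by blast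
    have eq: "Suc a + (g - 2) + (e + 1) = a + g + e" using g3 by simp
    have c3: "d' = cv (Suc a + (g - 2) + (e + 1))" unfolding eq using e(3) True by simp
    have c2: "g - 2 + (e + 1) < ?n" using e g3 by simp
    show ?thesis using c2 c3 by (intro exI[of _ "e + 1"]) simp
  next
    case False
    then have Edd: "E d d'" using st by (simp add: step_def)
    obtain m where m: "m < ?n" "d' = cv (a + m)" using cv_surj[OF dc] by blast
    have nm: "\<not> (0 < m \<and> m < g)"
    proof
      assume mm: "0 < m \<and> m < g"
      have "is_path E [d, d'] d (cv (a + m))" using Edd False m by (simp add: is_path_def)
      then have "min m (g - m) + 1 \<le> length [d, d'] - 1" using I2[of m "[d, d']"] mm m by auto
      then show False using mm by (simp add: min_def split: if_splits)
    qed
    show ?thesis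
    proof (cases "m = 0")
      case True
      have eq: "Suc a + (g - 2) + (?n - g + 1) = a + ?n" using g3 gn by simp
      have "cv (Suc a + (g - 2) + (?n - g + 1)) = cv (a + 0)"
        unfolding eq by (intro cv_cong) simp
      then show ?thesis using True m g3 gn by (intro exI[of _ "?n - g + 1"]) auto
    next
      case False
      then have "g \<le> m" using nm by simp
      moreover have "Suc a + (g - 2) + (m - g + 1) = a + m" using g3 calculation by simp
      ultimately show ?thesis using m g3 by (intro exI[of _ "m - g + 1"]) auto
    qed
  qed
  have J2: "min k (g - 2 - k) + 1 \<le> length Q - 1"
    if k: "0 < k" "k < g - 2" and p: "is_path E Q d' (cv (Suc a + k))"
      and cy: "\<forall>v\<in>set Q. v \<in> set cs \<longrightarrow> v = d' \<or> v = cv (Suc a + k)" for k Q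
  proof (cases "d' \<in> set cs")
    case True
    then obtain e where e: "1 \<le> e" "g - 2 + e < ?n" "d' = cv (Suc a + (g - 2) + e)" using J1 by blast
    show ?thesis using noshort_bound[OF e(3,1,2), of k Q] k p cy by simp
  next
    case False
    obtain Q0 where Q0: "is_path E Q0 d (cv (Suc a + k))"
      "\<forall>v\<in>set Q0. v \<in> set cs \<longrightarrow> v = d \<or> v = cv (Suc a + k)" "length Q0 \<le> length Q + 1"
      using walk_reduce[OF p False cy st] by blast
    have eq: "Suc a + k = a + (k + 1)" by simp
    have "min (k + 1) (g - (k + 1)) + 1 \<le> length Q0 - 1"
      using I2[of "k + 1" Q0] Q0 k unfolding eq by simp
    moreover have "Q \<noteq> []" using p by (simp add: is_path_def)
    moreover have mm: "min (k + 1) (g - (k + 1)) = min k (g - 2 - k) + 1" using k by (auto simp: min_def)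
    ultimately show ?thesis using Q0(3) by arith
  qed
  show ?thesis unfolding inv_def using gn J1 J2 by auto
qed

lemma fwin_refl: "fwin E m r r d"
  by (cases m) auto

lemma main:
  "inv a g d \<Longrightarrow> (g + 1) div 2 \<le> m \<Longrightarrow> fwin E m (cv a) (cv (a + g)) d"
proof (induction g arbitrary: a d m rule: less_induct)
  case (less g)
  show ?case
  proof (cases "g \<le> 2")
    case True
    then consider "g = 0" | "g = 1" | "g = 2" by linarith
    then show ?thesis
    proof cases
      case 1 then show ?thesis by (simp add: fwin_refl)
    next
      case 2
      then obtain m' where m: "m = Suc m'" using less.prems by (cases m) auto
      have "cv (a + 1) \<noteq> d" using inv_ne[OF less.prems(1), of 1] 2 by simp
      then show ?thesis using m 2 cv_step(1)[of a] by (auto simp: step_def)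
    next
      case 3
      then obtain m' where m: "m = Suc m'" using less.prems by (cases m) auto
      have "cv (a + 1) \<noteq> d" using inv_ne[OF less.prems(1), of 1] 3 by simp
      moreover have "cv (a + 2) = cv (Suc (a + 1))" by simp
      ultimately show ?thesis using m 3 cv_step(1)[of a] cv_step(2)[of "a + 1"]
        by (auto simp del: add_2_eq_Suc' add_2_eq_Suc simp: numeral_2_eq_2) 
    qed
  next
    case False
    then obtain m' where m: "m = Suc m'" using less.prems by (cases m) auto
    have m': "(g - 2 + 1) div 2 \<le> m'" using less.prems(2) m False by simp
    let ?r = "cv (Suc a)" and ?j = "cv (Suc a + (g - 2))"
    have eqg: "a + g = Suc (Suc a + (g - 2))" using False by simp
    have s1: "step E (cv a) ?r" using cv_step(1) by simp
    have s2: "step E (cv (a + g)) ?j" unfolding eqg by (rule cv_step(2))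
    have n1: "?r \<noteq> d" using inv_ne[OF less.prems(1), of 1] False by simp
    have eqj: "Suc a + (g - 2) = a + (g - 1)" using False by simp
    have n2: "?j \<noteq> d" unfolding eqj by (rule inv_ne[OF less.prems(1)]) simp
    have "\<forall>d'. step E d d' \<and> d' \<noteq> ?r \<and> d' \<noteq> ?j \<longrightarrow> fwin E m' ?r ?j d'"
    proof (intro allI impI)
      fix d' assume "step E d d' \<and> d' \<noteq> ?r \<and> d' \<noteq> ?j"
      then have "inv (Suc a) (g - 2) d'" using inv_step[OF less.prems(1)] False by simp
      moreover have lt: "g - 2 < g" using False by simp
      ultimately show "fwin E m' ?r ?j d'" using less.IH[OF lt _ m'] by blast
    qed
    then show ?thesis using m s1 s2 n1 n2 by auto
  qed
qed

end

lemma fwin_sym: "fwin E m r j d \<Longrightarrow> fwin E m j r d"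
proof (induction m arbitrary: r j d)
  case 0 then show ?case by simp
next
  case (Suc m)
  then show ?case by auto metis+
qed

theorem claim2:
  fixes V :: "'a set" and E :: "'a \<Rightarrow> 'a \<Rightarrow> bool" and cs :: "'a list" and r j d :: 'a
  assumes "simple_graph V E"
    and "connected_graph V E"
    and "is_cycle V E cs"
    and "\<not> has_shortcut V E cs"
    and "r \<in> set cs" and "j \<in> set cs" and "d \<in> set cs"
    and "d \<noteq> r" and "d \<noteq> j"
  shows "fwin E (length cs div 2) r j d"
proof -
  note L = assms(1,3,4)
  let ?n = "length cs"
  let ?c = "cv cs"
  obtain ir where ir: "ir < ?n" "r = cs ! ir" using assms(5) by (metis in_set_conv_nth)
  have rc: "r = ?c ir" using ir by (simp add: cv_def[OF L])
  obtain gj where gj: "gj < ?n" "j = ?c (ir + gj)" using cv_surj[OF L assms(6)] by blast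
  obtain gd where gd: "gd < ?n" "d = ?c (ir + gd)" using cv_surj[OF L assms(7)] by blast
  have gd0: "gd \<noteq> 0" using gd rc assms(8) by (metis add_0_right)
  have gdj: "gd \<noteq> gj" using gd gj assms(9) by auto
  show ?thesis
  proof (cases "gj < gd")
    case True
    have "inv E cs ir gj d"
      using inv_init[OF L, of gj "gd - gj" d ir] True gd by simp
    moreover have "(gj + 1) div 2 \<le> ?n div 2" using True gd by simp
    ultimately show ?thesis using main[OF L] rc gj by metis
  next
    case False
    then have lt: "gd < gj" using gdj by simp
    define a where "a = ir + gj"
    define g where "g = ?n - gj"
    have ra: "r = ?c (a + g)" using rc gj(1) unfolding a_def g_def
      by (simp add: cv_def[OF L])
    have eqa: "a + g + gd = (ir + gd) + ?n" unfolding a_def g_def using gj(1) by simp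
    have da: "d = ?c (a + g + gd)" unfolding eqa using gd
      by (simp add: cv_def[OF L])
    have "inv E cs a g d"
      using inv_init[OF L, of g gd d a] lt gd0 da gj(1) unfolding g_def by simp
    moreover have "(g + 1) div 2 \<le> ?n div 2" using lt gd0 unfolding g_def by simp
    ultimately have "fwin E (?n div 2) j r d" using main[OF L] ra gj(2) a_def by metis
    then show ?thesis by (rule fwin_sym)
  qed
qed

end
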